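(* Let $(A,G)$ be an admissible pair with $A\in M_{Q_0}(\mathbb Z)$ skew-symmetrizable. Then the quotient matrix $A/G$ is skew-symmetrizable.
   Context: $Q_0$ is a finite set. A matrix $B\in M_{Q_0}(\mathbb Z)$ is skew-symmetrizable if there is a diagonal integer matrix $D$ with non-negative (positive) diagonal entries such that $DB$ is skew-symmetric. An automorphism of $A=(a_{ij})$ is a permutation $g$ of $Q_0$ with $a_{gi,gj}=a_{ij}$ for all $i,j$; a group $G$ of such permutations is an automorphism group of $A$; it is admissible (and $(A,G)$ an admissible pair) if for distinct $i,j$ in the same $G$-orbit there is no path of length $1$ or $2$ from $i$ to $j$ in the valued quiver of $A$ (i.e. $a_{ij}\le0$ and no $k$ with $a_{ik}>0$, $a_{kj}>0$). With $\overline Q_0$ the set of $G$-orbits, the quotient matrix $A/G\in M_{\overline Q_0}(\mathbb Z)$ has entries $(A/G)_{\mathbf i,\mathbf j}=\sum_{k\in\mathbf i}a_{k,j}$ for any $j\in\mathbf j$. *)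

theory Defs
  imports "HOL-Combinatorics.Permutations"
begin

text \<open>Matrices indexed by a finite set Q are functions Q \<Rightarrow> Q \<Rightarrow> int (values outside Q irrelevant).\<close>

definition skew_symmetrizable :: "'q set \<Rightarrow> ('q \<Rightarrow> 'q \<Rightarrow> int) \<Rightarrow> bool" where
  "skew_symmetrizable Q B \<longleftrightarrow>
     (\<exists>d :: 'q \<Rightarrow> int. (\<forall>i\<in>Q. d i > 0) \<and>
        (\<forall>i\<in>Q. \<forall>j\<in>Q. d i * B i j = - (d j * B j i)))"

definition is_automorphism :: "'a set \<Rightarrow> ('a \<Rightarrow> 'a \<Rightarrow> int) \<Rightarrow> ('a \<Rightarrow> 'a) \<Rightarrow> bool" where
  "is_automorphism Q A g \<longleftrightarrow> g permutes Q \<and> (\<forall>i\<in>Q. \<forall>j\<in>Q. A (g i) (g j) = A i j)"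

definition automorphism_group :: "'a set \<Rightarrow> ('a \<Rightarrow> 'a \<Rightarrow> int) \<Rightarrow> ('a \<Rightarrow> 'a) set \<Rightarrow> bool" where
  "automorphism_group Q A G \<longleftrightarrow>
     (\<forall>g\<in>G. is_automorphism Q A g) \<and> id \<in> G \<and>
     (\<forall>g\<in>G. \<forall>h\<in>G. g \<circ> h \<in> G) \<and> (\<forall>g\<in>G. inv g \<in> G)"

definition orbit :: "('a \<Rightarrow> 'a) set \<Rightarrow> 'a \<Rightarrow> 'a set" where
  "orbit G i = (\<lambda>g. g i) ` G"

definition orbits :: "'a set \<Rightarrow> ('a \<Rightarrow> 'a) set \<Rightarrow> 'a set set" where
  "orbits Q G = orbit G ` Q"

definition admissible :: "'a set \<Rightarrow> ('a \<Rightarrow> 'a \<Rightarrow> int) \<Rightarrow> ('a \<Rightarrow> 'a) set \<Rightarrow> bool" where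
  "admissible Q A G \<longleftrightarrow> automorphism_group Q A G \<and>
     (\<forall>i\<in>Q. \<forall>j\<in>orbit G i. i \<noteq> j \<longrightarrow>
        A i j \<le> 0 \<and> \<not> (\<exists>k\<in>Q. A i k > 0 \<and> A k j > 0))"

definition quotient_matrix :: "('a \<Rightarrow> 'a \<Rightarrow> int) \<Rightarrow> 'a set \<Rightarrow> 'a set \<Rightarrow> int" where
  "quotient_matrix A I J = (\<Sum>k\<in>I. A k (SOME j. j \<in> J))"

end

theory Submission
  imports Defs
begin

lemma ag_perm: "automorphism_group Q A G \<Longrightarrow> g \<in> G \<Longrightarrow> g permutes Q"
  by (auto simp: automorphism_group_def is_automorphism_def)

lemma ag_aut: "automorphism_group Q A G \<Longrightarrow> g \<in> G \<Longrightarrow> i \<in> Q \<Longrightarrow> j \<in> Q \<Longrightarrow> A (g i) (g j) = A i j"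
  by (auto simp: automorphism_group_def is_automorphism_def)

lemma ag_finite: "finite Q \<Longrightarrow> automorphism_group Q A G \<Longrightarrow> finite G"
proof -
  assume f: "finite Q" and a: "automorphism_group Q A G"
  have "G \<subseteq> {p. p permutes Q}" using ag_perm[OF a] by auto
  then show ?thesis using finite_permutations[OF f] finite_subset by blast
qed

lemma ag_comp: "automorphism_group Q A G \<Longrightarrow> g \<in> G \<Longrightarrow> h \<in> G \<Longrightarrow> g \<circ> h \<in> G"
  by (auto simp: automorphism_group_def)

lemma ag_inv: "automorphism_group Q A G \<Longrightarrow> g \<in> G \<Longrightarrow> inv g \<in> G"
  by (auto simp: automorphism_group_def)

lemma ag_id: "automorphism_group Q A G \<Longrightarrow> id \<in> G"
  by (auto simp: automorphism_group_def)

lemma orbit_sub: "automorphism_group Q A G \<Longrightarrow> i \<in> Q \<Longrightarrow> orbit G i \<subseteq> Q"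
  using ag_perm by (fastforce simp: orbit_def permutes_in_image)

lemma orbit_self: "automorphism_group Q A G \<Longrightarrow> i \<in> orbit G i"
  using ag_id unfolding orbit_def by (metis id_apply image_eqI)

lemma orbit_finite: "finite Q \<Longrightarrow> automorphism_group Q A G \<Longrightarrow> finite (orbit G i)"
  using ag_finite unfolding orbit_def by blast

lemma orbit_comp_mem:
  assumes a: "automorphism_group Q A G" and j: "j \<in> orbit G i"
  shows "orbit G j \<subseteq> orbit G i"
proof
  fix x assume "x \<in> orbit G j"
  then obtain f where f: "f \<in> G" "x = f j" unfolding orbit_def by auto
  obtain h where h: "h \<in> G" "j = h i" using j unfolding orbit_def by auto
  have "x = (f \<circ> h) i" using f h by simp
  then show "x \<in> orbit G i" using ag_comp[OF a f(1) h(1)] unfolding orbit_def by blast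
qed

lemma orbit_image:
  assumes a: "automorphism_group Q A G" and g: "g \<in> G"
  shows "g ` orbit G i = orbit G i"
proof
  show "g ` orbit G i \<subseteq> orbit G i"
  proof
    fix x assume "x \<in> g ` orbit G i"
    then obtain f where f: "f \<in> G" "x = g (f i)" unfolding orbit_def by auto
    have "x = (g \<circ> f) i" using f by simp
    then show "x \<in> orbit G i" using ag_comp[OF a g f(1)] unfolding orbit_def by blast
  qed
  show "orbit G i \<subseteq> g ` orbit G i"
  proof
    fix x assume "x \<in> orbit G i"
    then obtain f where f: "f \<in> G" "x = f i" unfolding orbit_def by auto
    have "inv g \<circ> f \<in> G" using ag_comp[OF a ag_inv[OF a g] f(1)] .
    moreover have "g ((inv g \<circ> f) i) = x"
      using f ag_perm[OF a g] by (simp add: permutes_inverses(1))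
    ultimately show "x \<in> g ` orbit G i" unfolding orbit_def
      by (metis (no_types, lifting) image_eqI)
  qed
qed

lemma orbit_mem:
  assumes a: "automorphism_group Q A G" and j: "j \<in> orbit G i"
  shows "orbit G j = orbit G i"
proof
  show "orbit G j \<subseteq> orbit G i" using orbit_comp_mem[OF a j] .
  obtain h where h: "h \<in> G" "j = h i" using j unfolding orbit_def by auto
  have "i = inv h j" using h ag_perm[OF a h(1)] by (simp add: permutes_inverses(2))
  then have "i \<in> orbit G j" using ag_inv[OF a h(1)] unfolding orbit_def by blast
  then show "orbit G i \<subseteq> orbit G j" using orbit_comp_mem[OF a] by blast
qed

lemma sum_orbit_reindex:
  assumes a: "automorphism_group Q A G" and g: "g \<in> G"
  shows "(\<Sum>k\<in>orbit G i. f (g k)) = (\<Sum>k\<in>orbit G i. f k)"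
proof -
  have inj: "inj_on g (orbit G i)"
    using ag_perm[OF a g] permutes_inj by (metis inj_on_subset subset_UNIV)
  have "(\<Sum>k\<in>g ` orbit G i. f k) = (\<Sum>k\<in>orbit G i. f (g k))"
    using sum.reindex[OF inj] by simp
  then show ?thesis using orbit_image[OF a g] by simp
qed

theorem mainTheorem7:
  fixes Q0 :: "'a set" and A :: "'a \<Rightarrow> 'a \<Rightarrow> int" and G :: "('a \<Rightarrow> 'a) set"
  assumes "finite Q0"
    and "admissible Q0 A G"
    and "skew_symmetrizable Q0 A"
  shows "skew_symmetrizable (orbits Q0 G) (quotient_matrix A)"
proof -
  have fQ: "finite Q0" by fact
  have a: "automorphism_group Q0 A G" using assms(2) by (simp add: admissible_def)
  have fG: "finite G" using ag_finite[OF fQ a] .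
  obtain d where dpos: "\<forall>i\<in>Q0. d i > 0"
    and dsk: "\<forall>i\<in>Q0. \<forall>j\<in>Q0. d i * A i j = - (d j * A j i)"
    using assms(3) unfolding skew_symmetrizable_def by blast
  define d' where "d' i = (\<Sum>g\<in>G. d (g i))" for i
  have inQ: "g i \<in> Q0" if "g \<in> G" "i \<in> Q0" for g i
    using ag_perm[OF a that(1)] that(2) by (simp add: permutes_in_image)
  have d'pos: "d' i > 0" if "i \<in> Q0" for i
  proof -
    have "d (id i) > 0" using dpos that by simp
    moreover have "\<forall>g\<in>G. d (g i) \<ge> 0" using dpos inQ that by (meson less_imp_le)
    ultimately have "d (id i) \<le> d' i"
      unfolding d'_def using member_le_sum[OF ag_id[OF a], of "\<lambda>g. d (g i)"] fG by auto
    then show ?thesis using \<open>d (id i) > 0\<close> by linarith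
  qed
  have d'sk: "d' i * A i j = - (d' j * A j i)" if "i \<in> Q0" "j \<in> Q0" for i j
  proof -
    have e1: "d (g i) * A (g i) (g j) = - (d (g j) * A (g j) (g i))" if "g \<in> G" for g
      using dsk inQ[OF that \<open>i \<in> Q0\<close>] inQ[OF that \<open>j \<in> Q0\<close>] by blast
    have "d' i * A i j = (\<Sum>g\<in>G. d (g i) * A (g i) (g j))"
      unfolding d'_def sum_distrib_right
      by (rule sum.cong) (simp_all add: ag_aut[OF a _ that])
    also have "\<dots> = (\<Sum>g\<in>G. - (d (g j) * A (g j) (g i)))"
      by (rule sum.cong) (simp_all add: e1)
    also have "\<dots> = - (d' j * A j i)"
      unfolding d'_def sum_distrib_right sum_negf
      by (rule arg_cong[where f=uminus], rule sum.cong) (simp_all add: ag_aut[OF a _ that(2,1)])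
    finally show ?thesis .
  qed
  have d'inv: "d' (h i) = d' i" if h: "h \<in> G" for h i
  proof -
    have hp: "h permutes Q0" using ag_perm[OF a h] .
    have inj: "inj_on (\<lambda>g. g \<circ> h) G"
    proof (rule inj_onI)
      fix g1 g2 assume "g1 \<circ> h = g2 \<circ> h"
      then have "g1 \<circ> h \<circ> inv h = g2 \<circ> h \<circ> inv h" by simp
      then show "g1 = g2" using permutes_inv_o(1)[OF hp] by (simp add: o_assoc[symmetric])
    qed
    have img: "(\<lambda>g. g \<circ> h) ` G = G"
    proof
      show "(\<lambda>g. g \<circ> h) ` G \<subseteq> G" using ag_comp[OF a _ h] by auto
      show "G \<subseteq> (\<lambda>g. g \<circ> h) ` G"
      proof
        fix g assume g: "g \<in> G"
        have "g = (g \<circ> inv h) \<circ> h" using permutes_inv_o(2)[OF hp] by (simp add: o_assoc[symmetric])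
        moreover have "g \<circ> inv h \<in> G" using ag_comp[OF a g ag_inv[OF a h]] .
        ultimately show "g \<in> (\<lambda>g. g \<circ> h) ` G" by blast
      qed
    qed
    have "d' i = (\<Sum>g\<in>(\<lambda>g. g \<circ> h) ` G. d (g i))" unfolding d'_def img ..
    also have "\<dots> = (\<Sum>g\<in>G. d (g (h i)))" using sum.reindex[OF inj, of "\<lambda>g. d (g i)"] by (simp add: o_def)
    finally show ?thesis unfolding d'_def by simp
  qed
  define c where "c I = (SOME j. j \<in> I)" for I :: "'a set"
  define P where "P = (\<Prod>K\<in>orbits Q0 G. card K)"
  define D where "D I = d' (c I) * int (P div card I)" for I
  have orbI: "c I \<in> Q0 \<and> c I \<in> I \<and> I = orbit G (c I) \<and> finite I \<and> card I > 0"
    if IO: "I \<in> orbits Q0 G" for I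
  proof -
    obtain i where i: "i \<in> Q0" "I = orbit G i" using IO unfolding orbits_def by auto
    have "i \<in> I" using orbit_self[OF a] i by simp
    then have cI: "c I \<in> I" unfolding c_def by (metis someI_ex)
    have fI: "finite I" using orbit_finite[OF fQ a] i by simp
    show ?thesis using cI orbit_sub[OF a i(1)] i orbit_mem[OF a] fI card_gt_0_iff by fastforce
  qed
  have Pdvd: "card I dvd P" if "I \<in> orbits Q0 G" for I
    unfolding P_def using that fQ by (simp add: orbits_def dvd_prodI)
  have Ppos: "P > 0" unfolding P_def using orbI by (simp add: prod_pos)
  have Dmul: "D I * int (card I) = d' (c I) * int P" if "I \<in> orbits Q0 G" for I
  proof -
    have "P div card I * card I = P" using Pdvd[OF that] by simp
    then have "int (P div card I) * int (card I) = int P" by (metis of_nat_mult)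
    then show ?thesis unfolding D_def by (metis mult.assoc)
  qed
  show ?thesis
    unfolding skew_symmetrizable_def
  proof (intro exI[of _ D] conjI ballI)
    fix I assume I: "I \<in> orbits Q0 G"
    have "P div card I > 0" using Pdvd[OF I] Ppos orbI[OF I]
      by (metis dvd_div_eq_0_iff gr0I not_gr_zero)
    then show "D I > 0" unfolding D_def using d'pos orbI[OF I] by simp
  next
    fix I J assume I: "I \<in> orbits Q0 G" and J: "J \<in> orbits Q0 G"
    define i0 where "i0 = c I"
    define j0 where "j0 = c J"
    have i0: "i0 \<in> Q0" "i0 \<in> I" "I = orbit G i0" "finite I" "card I > 0"
      using orbI[OF I] i0_def by auto
    have j0: "j0 \<in> Q0" "j0 \<in> J" "J = orbit G j0" "finite J" "card J > 0"
      using orbI[OF J] j0_def by auto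
    have IQ: "I \<subseteq> Q0" using orbit_sub[OF a i0(1)] i0(3) by simp
    have JQ: "J \<subseteq> Q0" using orbit_sub[OF a j0(1)] j0(3) by simp
    have d'I: "d' k = d' i0" if "k \<in> I" for k
      using that i0(3) d'inv unfolding orbit_def by auto
    have d'J: "d' l = d' j0" if lJ: "l \<in> J" for l
      using that j0(3) d'inv unfolding orbit_def by auto
    define S where "S = (\<Sum>l\<in>J. \<Sum>k\<in>I. A l k)"
    have S1: "S = int (card J) * (\<Sum>k\<in>I. A j0 k)"
    proof -
      have "(\<Sum>k\<in>I. A l k) = (\<Sum>k\<in>I. A j0 k)" if lJ: "l \<in> J" for l
      proof -
        obtain g where g: "g \<in> G" "l = g j0" using lJ j0(3) unfolding orbit_def by auto
        have "(\<Sum>k\<in>I. A l k) = (\<Sum>k\<in>I. A l (g k))"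
          using sum_orbit_reindex[OF a g(1), of "A l" i0] i0(3) by simp
        also have "\<dots> = (\<Sum>k\<in>I. A j0 k)"
          using g ag_aut[OF a g(1) j0(1)] IQ by (intro sum.cong) auto
        finally show ?thesis .
      qed
      then show ?thesis unfolding S_def by simp
    qed
    have S2: "S = int (card I) * (\<Sum>l\<in>J. A l i0)"
    proof -
      have "(\<Sum>l\<in>J. A l k) = (\<Sum>l\<in>J. A l i0)" if kI: "k \<in> I" for k
      proof -
        obtain g where g: "g \<in> G" "k = g i0" using kI i0(3) unfolding orbit_def by auto
        have "(\<Sum>l\<in>J. A l k) = (\<Sum>l\<in>J. A (g l) k)"
          using sum_orbit_reindex[OF a g(1), of "\<lambda>l. A l k" j0] j0(3) by simp
        also have "\<dots> = (\<Sum>l\<in>J. A l i0)"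
          using g ag_aut[OF a g(1) _ i0(1)] JQ by (intro sum.cong) auto
        finally show ?thesis .
      qed
      note eqk = this
      have "S = (\<Sum>k\<in>I. \<Sum>l\<in>J. A l k)" unfolding S_def by (rule sum.swap)
      also have "\<dots> = (\<Sum>k\<in>I. \<Sum>l\<in>J. A l i0)" by (rule sum.cong) (simp_all add: eqk)
      finally show ?thesis by simp
    qed
    have key1: "d' i0 * (\<Sum>k\<in>I. A k j0) = - (d' j0 * (\<Sum>k\<in>I. A j0 k))"
    proof -
      have "d' i0 * (\<Sum>k\<in>I. A k j0) = (\<Sum>k\<in>I. d' k * A k j0)"
        unfolding sum_distrib_left using d'I by simp
      also have "\<dots> = (\<Sum>k\<in>I. - (d' j0 * A j0 k))"
        using d'sk IQ j0(1) by (intro sum.cong) auto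
      finally show ?thesis by (simp add: sum_distrib_left sum_negf)
    qed
    have QI: "quotient_matrix A I J = (\<Sum>k\<in>I. A k j0)"
      unfolding quotient_matrix_def j0_def c_def ..
    have QJ: "quotient_matrix A J I = (\<Sum>l\<in>J. A l i0)"
      unfolding quotient_matrix_def i0_def c_def ..
    have DI: "D I * int (card I) = d' i0 * int P" using Dmul[OF I] i0_def by simp
    have DJ: "D J * int (card J) = d' j0 * int P" using Dmul[OF J] j0_def by simp
    have "(D I * quotient_matrix A I J) * (int (card I) * int (card J))
        = (- (D J * quotient_matrix A J I)) * (int (card I) * int (card J))"
    proof -
      have "(D I * quotient_matrix A I J) * (int (card I) * int (card J))
          = int (card J) * (D I * int (card I)) * (\<Sum>k\<in>I. A k j0)" unfolding QI by (simp add: algebra_simps)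
      also have "\<dots> = int P * int (card J) * (d' i0 * (\<Sum>k\<in>I. A k j0))" unfolding DI by (simp add: algebra_simps)
      also have "\<dots> = - (int P * d' j0 * S)" unfolding key1 S1 by (simp add: algebra_simps)
      also have "\<dots> = - (int (card I) * (D J * int (card J)) * (\<Sum>l\<in>J. A l i0))"
        unfolding DJ S2 by (simp add: algebra_simps)
      also have "\<dots> = (- (D J * quotient_matrix A J I)) * (int (card I) * int (card J))"
        unfolding QJ by (simp add: algebra_simps)
      finally show ?thesis .
    qed
    moreover have "int (card I) * int (card J) \<noteq> 0" using i0(5) j0(5) by simp
    ultimately show "D I * quotient_matrix A I J = - (D J * quotient_matrix A J I)"
      by (metis mult_right_cancel)
  qed
qed

end
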